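(* Let $k>1$, $F=F(a_1,\dots,a_k)$ and $0<\lambda<1/3$. Let $E(\lambda)$ be the set of all cyclically reduced words $x$ that are not proper powers and such that for every $y\in\mathcal Y(x,\lambda)$ the length of the maximal common initial segment of $x$ and $y$ is $<\lambda|x|$. Then $E(\lambda)$ is exponentially $CR$-generic.
   Context: $A_{2k}=\{a_1^{\pm1},\dots,a_k^{\pm1}\}$; $F$ is identified with the set of freely reduced words over $A_{2k}$, and $CR$ is the set of cyclically reduced words. A relabeling automorphism of $F$ is an automorphism whose restriction to $A_{2k}$ is a permutation of $A_{2k}$. For a cyclically reduced non-proper-power word $x$, $\mathcal Y(x,\lambda)$ is the set of all words $y$ such that either (1) $y$ is a cyclic permutation of $\tau(x)$ for some nontrivial relabeling automorphism $\tau$; or (2) $y$ is a cyclic permutation of $\tau(x^{-1})$ for some (possibly trivial) relabeling automorphism $\tau$; or (3) $y$ is obtained by a nontrivial cyclic permutation of $x$. For $S\subseteq F$, $\rho(n,S)$ is the number of $x\in S$ with $|x|\le n$; $S\subseteq CR$ is exponentially $CR$-generic if there are $C>0$, $0<\sigma<1$ with $|\rho(n,S)/\rho(n,CR)-1|\le C\sigma^n$ for all $n$. A word of length $\lambda|x|$ with $\lambda|x|$ non-integer means length $\lfloor\lambda|x|\rfloor$. *)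

theory Defs
  imports Complex_Main
begin

text \<open>Letters of A_2k: (i, True) is a_(i+1), (i, False) is its inverse, for i < k.\<close>
type_synonym letter = "nat \<times> bool"

definition letters :: "nat \<Rightarrow> letter set" where
  "letters k = {(i, b). i < k}"

fun inv_letter :: "letter \<Rightarrow> letter" where
  "inv_letter (i, b) = (i, \<not> b)"

fun freely_reduced :: "letter list \<Rightarrow> bool" where
  "freely_reduced (a # b # w) = (b \<noteq> inv_letter a \<and> freely_reduced (b # w))"
| "freely_reduced _ = True"

text \<open>Elements of F = F(a_1..a_k): freely reduced words over A_2k.\<close>
definition fword :: "nat \<Rightarrow> letter list \<Rightarrow> bool" where
  "fword k w \<longleftrightarrow> set w \<subseteq> letters k \<and> freely_reduced w"

definition cyc_reduced :: "nat \<Rightarrow> letter list \<Rightarrow> bool" where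
  "cyc_reduced k w \<longleftrightarrow> fword k w \<and> (w = [] \<or> last w \<noteq> inv_letter (hd w))"

definition CR :: "nat \<Rightarrow> letter list set" where
  "CR k = {w. cyc_reduced k w}"

text \<open>Free reduction (group multiplication in F is reduce of concatenation).\<close>
fun red_cons :: "letter \<Rightarrow> letter list \<Rightarrow> letter list" where
  "red_cons a [] = [a]"
| "red_cons a (b # w) = (if b = inv_letter a then w else a # b # w)"

definition reduce :: "letter list \<Rightarrow> letter list" where
  "reduce w = foldr red_cons w []"

definition proper_power :: "nat \<Rightarrow> letter list \<Rightarrow> bool" where
  "proper_power k x \<longleftrightarrow> (\<exists>u m. fword k u \<and> m \<ge> 2 \<and> x = reduce (concat (replicate m u)))"

definition word_inv :: "letter list \<Rightarrow> letter list" where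
  "word_inv w = rev (map inv_letter w)"

text \<open>Relabeling automorphisms correspond exactly to permutations sigma of A_2k
  compatible with inversion; the automorphism acts letterwise on reduced words.\<close>
definition relabeling :: "nat \<Rightarrow> (letter \<Rightarrow> letter) \<Rightarrow> bool" where
  "relabeling k \<sigma> \<longleftrightarrow> bij_betw \<sigma> (letters k) (letters k) \<and>
     (\<forall>a \<in> letters k. \<sigma> (inv_letter a) = inv_letter (\<sigma> a))"

definition nontrivial_on :: "nat \<Rightarrow> (letter \<Rightarrow> letter) \<Rightarrow> bool" where
  "nontrivial_on k \<sigma> \<longleftrightarrow> (\<exists>a \<in> letters k. \<sigma> a \<noteq> a)"

definition Yset :: "nat \<Rightarrow> letter list \<Rightarrow> letter list set" where
  "Yset k x = {y.
      (\<exists>\<sigma> n. relabeling k \<sigma> \<and> nontrivial_on k \<sigma> \<and> y = rotate n (map \<sigma> x))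
    \<or> (\<exists>\<sigma> n. relabeling k \<sigma> \<and> y = rotate n (map \<sigma> (word_inv x)))
    \<or> (\<exists>n. 0 < n \<and> n < length x \<and> y = rotate n x)}"

fun lcp :: "letter list \<Rightarrow> letter list \<Rightarrow> nat" where
  "lcp (a # u) (b # v) = (if a = b then Suc (lcp u v) else 0)"
| "lcp _ _ = 0"

definition Eset :: "nat \<Rightarrow> real \<Rightarrow> letter list set" where
  "Eset k lam = {x. cyc_reduced k x \<and> \<not> proper_power k x \<and>
      (\<forall>y \<in> Yset k x. real (lcp x y) < lam * real (length x))}"

definition rho :: "nat \<Rightarrow> letter list set \<Rightarrow> nat" where
  "rho n S = card {x \<in> S. length x \<le> n}"

definition exp_CR_generic :: "nat \<Rightarrow> letter list set \<Rightarrow> bool" where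
  "exp_CR_generic k S \<longleftrightarrow> S \<subseteq> CR k \<and>
     (\<exists>C s. C > 0 \<and> 0 < s \<and> s < 1 \<and>
        (\<forall>n. \<bar>real (rho n S) / real (rho n (CR k)) - 1\<bar> \<le> C * s ^ n))"

end

theory Submission
  imports Defs "HOL-Library.FuncSet"
begin


lemma inv_inv[simp]: "inv_letter (inv_letter a) = a"
  by (cases a) auto

lemma inv_neq[simp]: "inv_letter a \<noteq> a"
  by (cases a) auto

lemma inv_neq'[simp]: "a \<noteq> inv_letter a"
  by (cases a) auto

lemma inv_inj: "inv_letter a = inv_letter b \<longleftrightarrow> a = b"
  by (metis inv_inv)

lemma inv_letters: "a \<in> letters k \<Longrightarrow> inv_letter a \<in> letters k"
  by (cases a) (auto simp: letters_def)

lemma fr_Cons: "freely_reduced (a # w) \<longleftrightarrow> freely_reduced w \<and> (w = [] \<or> hd w \<noteq> inv_letter a)"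
  by (cases w) auto

lemma fr_append: "freely_reduced (xs @ ys) \<longleftrightarrow>
   freely_reduced xs \<and> freely_reduced ys \<and> (xs = [] \<or> ys = [] \<or> hd ys \<noteq> inv_letter (last xs))"
  by (induction xs) (auto simp: fr_Cons)

lemma fr_nth: "freely_reduced w \<Longrightarrow> Suc j < length w \<Longrightarrow> w ! Suc j \<noteq> inv_letter (w ! j)"
proof (induction w arbitrary: j rule: freely_reduced.induct)
  case (1 a b w)
  then show ?case by (cases j) auto
qed auto

lemma word_inv_Cons: "word_inv (a # v) = word_inv v @ [inv_letter a]"
  by (simp add: word_inv_def)

lemma word_inv_Nil[simp]: "word_inv [] = []" by (simp add: word_inv_def)

lemma word_inv_eq_Nil[simp]: "word_inv v = [] \<longleftrightarrow> v = []" by (simp add: word_inv_def)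

lemma hd_word_inv: "v \<noteq> [] \<Longrightarrow> hd (word_inv v) = inv_letter (last v)"
  by (simp add: word_inv_def hd_rev last_map)

lemma last_word_inv: "v \<noteq> [] \<Longrightarrow> last (word_inv v) = inv_letter (hd v)"
  by (simp add: word_inv_def last_rev hd_map)

lemma red_cons_fr: "freely_reduced w \<Longrightarrow> freely_reduced (red_cons a w)"
  by (cases w) (auto simp: fr_Cons)

lemma reduce_Cons: "reduce (a # w) = red_cons a (reduce w)"
  by (simp add: reduce_def)

lemma reduce_fr: "freely_reduced (reduce w)"
  by (induction w) (auto simp: reduce_def red_cons_fr)

lemma reduce_id: "freely_reduced w \<Longrightarrow> reduce w = w"
proof (induction w)
  case (Cons a w)
  then show ?case by (cases w) (auto simp: reduce_Cons fr_Cons)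
qed (simp add: reduce_def)

lemma reduce_append: "reduce (xs @ ys) = foldr red_cons xs (reduce ys)"
  by (simp add: reduce_def)

lemma red_cons_cancel: "freely_reduced w \<Longrightarrow> red_cons b (red_cons (inv_letter b) w) = w"
proof (cases w)
  case (Cons c w')
  assume fr: "freely_reduced w"
  show ?thesis
  proof (cases "c = b")
    case True
    then show ?thesis using Cons fr by (cases w') auto
  qed (use Cons in auto)
qed simp

lemma reduce_del: "reduce (xs @ [b, inv_letter b] @ ys) = reduce (xs @ ys)"
  by (simp add: reduce_append reduce_Cons red_cons_cancel[OF reduce_fr])

lemma reduce_del_word: "reduce (xs @ word_inv v @ v @ ys) = reduce (xs @ ys)"
proof (induction v arbitrary: ys)
  case (Cons a v)
  have "xs @ word_inv (a # v) @ (a # v) @ ys = (xs @ word_inv v) @ [inv_letter a, inv_letter (inv_letter a)] @ (v @ ys)"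
    by (simp add: word_inv_Cons)
  then show ?case using reduce_del Cons by (metis append.assoc)
qed simp

lemma reduce_right: "reduce (xs @ ys) = reduce (xs @ reduce ys)"
  by (simp add: reduce_append reduce_id[OF reduce_fr])

lemma reduce_pow: "j \<ge> 1 \<Longrightarrow> reduce (concat (replicate j (v @ w @ word_inv v))) = reduce (v @ concat (replicate j w) @ word_inv v)"
proof (induction j rule: dec_induct)
  case base
  then show ?case by simp
next
  case (step j)
  have "reduce (concat (replicate (Suc j) (v @ w @ word_inv v)))
      = reduce ((v @ w @ word_inv v) @ concat (replicate j (v @ w @ word_inv v)))" by simp
  also have "\<dots> = reduce ((v @ w @ word_inv v) @ reduce (concat (replicate j (v @ w @ word_inv v))))"
    by (rule reduce_right)
  also have "\<dots> = reduce ((v @ w @ word_inv v) @ reduce (v @ concat (replicate j w) @ word_inv v))"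
    using step by simp
  also have "\<dots> = reduce ((v @ w) @ word_inv v @ v @ (concat (replicate j w) @ word_inv v))"
    using reduce_right[of "v @ w @ word_inv v" "v @ concat (replicate j w) @ word_inv v"] by simp
  also have "\<dots> = reduce (v @ concat (replicate (Suc j) w) @ word_inv v)"
    by (simp only: reduce_del_word) simp
  finally show ?case .
qed

lemma fr_sub: "freely_reduced (xs @ ys @ zs) \<Longrightarrow> freely_reduced ys"
  by (simp add: fr_append)

lemma decomp: "freely_reduced u \<Longrightarrow> \<exists>v w. u = v @ w @ word_inv v \<and> (w = [] \<or> last w \<noteq> inv_letter (hd w))"
proof (induction "length u" arbitrary: u rule: less_induct)
  case less
  show ?case
  proof (cases "u = [] \<or> last u \<noteq> inv_letter (hd u)")
    case True
    then show ?thesis by (metis append.left_neutral append_Nil2 word_inv_Nil)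
  next
    case False
    then obtain a u1 where u: "u = a # u1" and lst: "last u = inv_letter a"
      by (cases u) auto
    have "u1 \<noteq> []" using u lst by auto
    then obtain u' where u1: "u1 = u' @ [inv_letter a]" using lst u
      by (metis append_butlast_last_id last_ConsR)
    have fr': "freely_reduced u'" using less.prems u u1 fr_sub[of "[a]" u' "[inv_letter a]"] by simp
    obtain v' w' where d: "u' = v' @ w' @ word_inv v'" "w' = [] \<or> last w' \<noteq> inv_letter (hd w')"
      using less.hyps[OF _ fr'] u u1 by auto
    show ?thesis
      by (rule exI[of _ "a # v'"], rule exI[of _ w']) (use d u u1 in \<open>simp add: word_inv_Cons\<close>)
  qed
qed

lemma hd_pow: "j \<ge> 1 \<Longrightarrow> w \<noteq> [] \<Longrightarrow> hd (concat (replicate j w)) = hd w"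
  by (cases j) auto

lemma last_pow: "j \<ge> 1 \<Longrightarrow> w \<noteq> [] \<Longrightarrow> last (concat (replicate j w)) = last w"
  by (induction j rule: dec_induct) auto

lemma fr_pow: "freely_reduced w \<Longrightarrow> last w \<noteq> inv_letter (hd w) \<Longrightarrow> w \<noteq> [] \<Longrightarrow> freely_reduced (concat (replicate j w))"
proof (induction j)
  case (Suc j)
  then show ?case
    by (cases "j = 0") (auto simp: fr_append hd_pow)
qed simp

lemma proper_power_struct:
  assumes "cyc_reduced k x" "proper_power k x" "x \<noteq> []"
  shows "\<exists>w j. j \<ge> 2 \<and> w \<noteq> [] \<and> x = concat (replicate j w)"
proof -
  obtain u j where u: "fword k u" "j \<ge> 2" "x = reduce (concat (replicate j u))"
    using assms(2) by (auto simp: proper_power_def)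
  have fru: "freely_reduced u" using u(1) by (simp add: fword_def)
  obtain v w where d: "u = v @ w @ word_inv v" "w = [] \<or> last w \<noteq> inv_letter (hd w)"
    using decomp[OF fru] by blast
  have x: "x = reduce (v @ concat (replicate j w) @ word_inv v)"
    using u reduce_pow[of j v w] d(1) by simp
  show ?thesis
  proof (cases "w = []")
    case True
    have "v = []"
    proof (rule ccontr)
      assume "v \<noteq> []"
      then show False using fru d(1) True by (simp add: fr_append hd_word_inv)
    qed
    then show ?thesis using x True assms(3) by (simp add: reduce_def)
  next
    case False
    have frs: "freely_reduced v" "freely_reduced w" "freely_reduced (word_inv v)"
      "v \<noteq> [] \<Longrightarrow> hd w \<noteq> inv_letter (last v)" "v \<noteq> [] \<Longrightarrow> hd (word_inv v) \<noteq> inv_letter (last w)"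
      using fru d(1) False by (auto simp: fr_append)
    have j1: "j \<ge> 1" using u by simp
    have frX: "freely_reduced (v @ concat (replicate j w) @ word_inv v)"
      using frs fr_pow[of w j] d(2) False j1 by (auto simp: fr_append hd_pow last_pow)
    have xe: "x = v @ concat (replicate j w) @ word_inv v" using x reduce_id[OF frX] by simp
    have "v = []"
    proof (rule ccontr)
      assume v: "v \<noteq> []"
      have "hd x = hd v" "last x = inv_letter (hd v)" using xe v by (auto simp: last_word_inv)
      then show False using assms(1) xe v by (auto simp: cyc_reduced_def)
    qed
    then show ?thesis using xe u False by auto
  qed
qed

lemma rotate_pow: "j \<ge> 1 \<Longrightarrow> rotate (length w) (concat (replicate j w)) = concat (replicate j w)"
proof -
  assume "j \<ge> 1"
  then obtain j' where "j = Suc j'" by (cases j) auto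
  moreover have "concat (replicate j' w) @ w = w @ concat (replicate j' w)" by (induction j') auto
  ultimately show ?thesis by (simp add: rotate_append)
qed



definition ext :: "'a list set \<Rightarrow> nat \<Rightarrow> 'a list \<Rightarrow> 'a set" where
  "ext S j x = {y ! j | y. y \<in> S \<and> take j y = take j x}"

lemma take_Suc_img:
  assumes "\<forall>x\<in>S. length x = m" "j < m"
  shows "take (Suc j) ` S = (\<Union>p\<in>take j ` S. (\<lambda>a. p @ [a]) ` {y ! j | y. y \<in> S \<and> take j y = p})"
    (is "?L = ?R")
proof
  show "?L \<subseteq> ?R"
  proof
    fix z assume "z \<in> take (Suc j) ` S"
    then obtain x where x: "x \<in> S" "z = take (Suc j) x" by auto
    then have "z = take j x @ [x ! j]" using assms by (simp add: take_Suc_conv_app_nth)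
    then show "z \<in> ?R" using x by blast
  qed
next
  show "?R \<subseteq> ?L"
  proof
    fix z assume "z \<in> (\<Union>p\<in>take j ` S. (\<lambda>a. p @ [a]) ` {y ! j | y. y \<in> S \<and> take j y = p})"
    then obtain y where y: "y \<in> S" "z = take j y @ [y ! j]" by auto
    then have "z = take (Suc j) y" using assms by (simp add: take_Suc_conv_app_nth)
    then show "z \<in> take (Suc j) ` S" using y by blast
  qed
qed

lemma take_all_img: "\<forall>x\<in>S. length x = m \<Longrightarrow> take m ` S = S"
  by (auto simp: image_iff)

lemma count_upper:
  assumes fin: "finite S" and len: "\<forall>x\<in>S. length x = m"
    and bd: "\<forall>j<m. \<forall>x\<in>S. card (ext S j x) \<le> c j"
  shows "card S \<le> (\<Prod>j<m. c j)"
proof -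
  have "j \<le> m \<Longrightarrow> card (take j ` S) \<le> (\<Prod>i<j. c i)" for j
  proof (induction j)
    case 0
    have sub: "take 0 ` S \<subseteq> {[]}" by auto
    have "card (take 0 ` S) \<le> 1" using card_mono[OF _ sub] by simp
    then show ?case by simp
  next
    case (Suc j)
    have jm: "j < m" using Suc by simp
    let ?E = "\<lambda>p. {y ! j | y. y \<in> S \<and> take j y = p}"
    have fE: "finite (?E p)" for p
    proof -
      have "?E p \<subseteq> (\<lambda>y. y ! j) ` S" by auto
      then show ?thesis using fin finite_subset by blast
    qed
    have "card (take (Suc j) ` S) = card (\<Union>p\<in>take j ` S. (\<lambda>a. p @ [a]) ` ?E p)"
      using take_Suc_img[OF len jm] by simp
    also have "\<dots> \<le> (\<Sum>p\<in>take j ` S. card ((\<lambda>a. p @ [a]) ` ?E p))"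
      using fin by (intro card_UN_le) auto
    also have "\<dots> \<le> (\<Sum>p\<in>take j ` S. c j)"
    proof (rule sum_mono)
      fix p assume "p \<in> take j ` S"
      then obtain x where x: "x \<in> S" "p = take j x" by auto
      have 1: "card ((\<lambda>a. p @ [a]) ` ?E p) \<le> card (?E p)" by (rule card_image_le[OF fE])
      have e: "?E p = ext S j x" using x by (simp add: ext_def)
      have "card (ext S j x) \<le> c j" using bd jm x by blast
      then show "card ((\<lambda>a. p @ [a]) ` ?E p) \<le> c j" using 1 e by simp
    qed
    also have "\<dots> = card (take j ` S) * c j" by simp
    also have "\<dots> \<le> (\<Prod>i<j. c i) * c j" using Suc by simp
    also have "\<dots> = (\<Prod>i<Suc j. c i)" by simp
    finally show ?case .
  qed
  from this[of m] show ?thesis using take_all_img[OF len] by simp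
qed

lemma count_lower:
  assumes fin: "finite S" and len: "\<forall>x\<in>S. length x = m" and ne: "S \<noteq> {}"
    and bd: "\<forall>j<m. \<forall>x\<in>S. card (ext S j x) \<ge> c j"
  shows "card S \<ge> (\<Prod>j<m. c j)"
proof -
  have "j \<le> m \<Longrightarrow> card (take j ` S) \<ge> (\<Prod>i<j. c i)" for j
  proof (induction j)
    case 0
    have "take 0 ` S = {[]}" using ne by auto
    then show ?case by simp
  next
    case (Suc j)
    have jm: "j < m" using Suc by simp
    let ?E = "\<lambda>p. {y ! j | y. y \<in> S \<and> take j y = p}"
    have fE: "finite (?E p)" for p
    proof -
      have "?E p \<subseteq> (\<lambda>y. y ! j) ` S" by auto
      then show ?thesis using fin finite_subset by blast
    qed
    have "(\<Prod>i<Suc j. c i) = (\<Prod>i<j. c i) * c j" by simp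
    also have "\<dots> \<le> card (take j ` S) * c j" using Suc by simp
    also have "\<dots> = (\<Sum>p\<in>take j ` S. c j)" by simp
    also have "\<dots> \<le> (\<Sum>p\<in>take j ` S. card ((\<lambda>a. p @ [a]) ` ?E p))"
    proof (rule sum_mono)
      fix p assume "p \<in> take j ` S"
      then obtain x where x: "x \<in> S" "p = take j x" by auto
      have 1: "c j \<le> card (ext S j x)" using bd jm x by blast
      have e: "ext S j x = ?E p" using x by (simp add: ext_def)
      have "card (?E p) = card ((\<lambda>a. p @ [a]) ` ?E p)"
        by (rule card_image[symmetric]) (auto simp: inj_on_def)
      then show "c j \<le> card ((\<lambda>a. p @ [a]) ` ?E p)" using 1 e by simp
    qed
    also have "\<dots> = card (\<Union>p\<in>take j ` S. (\<lambda>a. p @ [a]) ` ?E p)"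
    proof (rule card_UN_disjoint[symmetric])
      show "finite (take j ` S)" using fin by simp
      show "\<forall>i\<in>take j ` S. finite ((\<lambda>a. i @ [a]) ` ?E i)" using fE by simp
      show "\<forall>i\<in>take j ` S. \<forall>i'\<in>take j ` S. i \<noteq> i' \<longrightarrow> (\<lambda>a. i @ [a]) ` ?E i \<inter> (\<lambda>a. i' @ [a]) ` ?E i' = {}"
      proof (intro ballI impI)
        fix i i' assume ii: "i \<in> take j ` S" "i' \<in> take j ` S" "i \<noteq> i'"
        have "length i = j" "length i' = j" using ii(1,2) len jm by auto
        then show "(\<lambda>a. i @ [a]) ` ?E i \<inter> (\<lambda>a. i' @ [a]) ` ?E i' = {}"
          using ii(3) by auto
      qed
    qed
    also have "\<dots> = card (take (Suc j) ` S)" using take_Suc_img[OF len jm] by simp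
    finally show ?case .
  qed
  from this[of m] show ?thesis using take_all_img[OF len] by simp
qed



lemma card_letters: "card (letters k) = 2 * k"
proof -
  have "letters k = {..<k} \<times> (UNIV :: bool set)" by (auto simp: letters_def)
  then show ?thesis by (simp add: card_cartesian_product)
qed

lemma finite_letters: "finite (letters k)"
  by (simp add: letters_def finite_subset[of _ "{..<k} \<times> UNIV"] subset_iff)

lemma fword_nth: "fword k x \<Longrightarrow> j < length x \<Longrightarrow> x ! j \<in> letters k"
  by (auto simp: fword_def dest: nth_mem)

definition W :: "nat \<Rightarrow> nat \<Rightarrow> letter list set" where
  "W k m = {x. fword k x \<and> length x = m}"

lemma finite_W: "finite (W k m)"
proof -
  have "W k m \<subseteq> {xs. set xs \<subseteq> letters k \<and> length xs = m}" by (auto simp: W_def fword_def)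
  then show ?thesis using finite_lists_length_eq[OF finite_letters] finite_subset by blast
qed

lemma ext_sub_letters: "S \<subseteq> W k m \<Longrightarrow> j < m \<Longrightarrow> ext S j x \<subseteq> letters k"
proof
  fix a assume S: "S \<subseteq> W k m" and j: "j < m" and "a \<in> ext S j x"
  then obtain y where y: "y \<in> S" "a = y ! j" by (auto simp: ext_def)
  then have "fword k y" "length y = m" using S by (auto simp: W_def)
  then show "a \<in> letters k" using y j fword_nth by auto
qed

lemma ext_sub_prev: assumes "S \<subseteq> W k m" "j < m" "x \<in> S" "j > 0"
  shows "ext S j x \<subseteq> letters k - {inv_letter (x ! (j - 1))}"
proof
  fix a assume "a \<in> ext S j x"
  then obtain y where y: "y \<in> S" "take j y = take j x" "a = y ! j" by (auto simp: ext_def)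
  have "y ! (j - 1) = take j y ! (j - 1)" using assms by simp
  also have "\<dots> = x ! (j - 1)" using y assms by simp
  finally have e: "y ! (j - 1) = x ! (j - 1)" .
  have fy: "freely_reduced y" "length y = m" using y assms by (auto simp: W_def fword_def)
  have sj: "Suc (j - 1) = j" using assms by simp
  have "Suc (j - 1) < length y" using fy(2) assms by simp
  from fr_nth[OF fy(1) this] have "y ! Suc (j - 1) \<noteq> inv_letter (y ! (j - 1))" .
  then have "a \<noteq> inv_letter (x ! (j - 1))" using y e assms by simp
  moreover have "a \<in> letters k" using ext_sub_letters[OF assms(1,2)] \<open>a \<in> ext S j x\<close> by blast
  ultimately show "a \<in> letters k - {inv_letter (x ! (j - 1))}" by simp
qed

lemma ext_card_q: assumes "S \<subseteq> W k m" "j < m" "x \<in> S"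
  shows "card (ext S j x) \<le> (if j = 0 then 2 * k else 2 * k - 1)"
proof (cases "j = 0")
  case True
  then show ?thesis using card_mono[OF finite_letters ext_sub_letters[OF assms(1,2)]] by (simp add: card_letters)
next
  case False
  have "fword k x" "length x = m" using assms by (auto simp: W_def)
  then have "x ! (j - 1) \<in> letters k" using assms fword_nth by auto
  then have "inv_letter (x ! (j - 1)) \<in> letters k" by (rule inv_letters)
  then have "card (letters k - {inv_letter (x ! (j - 1))}) = 2 * k - 1"
    by (simp add: card_letters finite_letters)
  then show ?thesis using card_mono[OF _ ext_sub_prev[OF assms]] False finite_letters by simp
qed

lemma UB:
  assumes k: "k \<ge> 2" and S: "S \<subseteq> W k m" and G: "G \<subseteq> {..<m}"
    and bd: "\<forall>j\<in>G. \<forall>x\<in>S. card (ext S j x) \<le> 2 * k - 2"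
  shows "real (card S) \<le> 2 * real (2 * k - 1) ^ m * (real (2 * k - 2) / real (2 * k - 1)) ^ card G"
proof -
  define q where "q = 2 * k - 1"
  have q3: "q \<ge> 3" using k by (simp add: q_def)
  define c where "c j = (if j \<in> G then q - 1 else if j = 0 then 2 * k else q)" for j
  define d where "d j = (if j \<in> G then q - 1 else q)" for j
  have finS: "finite S" using finite_subset[OF S finite_W] .
  have "card S \<le> (\<Prod>j<m. c j)"
  proof (rule count_upper[OF finS])
    show "\<forall>x\<in>S. length x = m" using S by (auto simp: W_def)
    show "\<forall>j<m. \<forall>x\<in>S. card (ext S j x) \<le> c j"
    proof (intro allI impI ballI)
      fix j x assume jx: "j < m" "x \<in> S"
      show "card (ext S j x) \<le> c j"
      proof (cases "j \<in> G")
        case True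
        have "q - 1 = 2 * k - 2" by (simp add: q_def)
        then show ?thesis using bd jx True by (simp add: c_def)
      next
        case False
        then show ?thesis using ext_card_q[OF S jx(1,2)] by (cases "j = 0") (simp_all add: c_def q_def)
      qed
    qed
  qed
  also have "(\<Prod>j<m. c j) \<le> 2 * (\<Prod>j<m. d j)"
  proof (cases m)
    case 0
    then show ?thesis by simp
  next
    case (Suc m')
    have "(\<Prod>j<m. c j) = c 0 * (\<Prod>i<m'. c (Suc i))" unfolding Suc prod.lessThan_Suc_shift ..
    also have "\<dots> \<le> (2 * d 0) * (\<Prod>i<m'. d (Suc i))"
    proof (rule mult_mono)
      have "2 * k \<le> 2 * q" using k by (simp add: q_def)
      then show "c 0 \<le> 2 * d 0" unfolding c_def d_def by (cases "0 \<in> G") simp_all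
      show "(\<Prod>i<m'. c (Suc i)) \<le> (\<Prod>i<m'. d (Suc i))"
        by (rule prod_mono) (simp add: c_def d_def)
    qed auto
    also have "\<dots> = 2 * (\<Prod>j<m. d j)" unfolding Suc prod.lessThan_Suc_shift by simp
    finally show ?thesis .
  qed
  also have "(\<Prod>j<m. d j) = (q - 1) ^ card G * q ^ (m - card G)"
  proof -
    have "(\<Prod>j<m. d j) = prod (\<lambda>_. q - 1) ({..<m} \<inter> {j. j \<in> G}) * prod (\<lambda>_. q) ({..<m} \<inter> - {j. j \<in> G})"
      unfolding d_def by (rule prod.If_cases) simp
    also have "{..<m} \<inter> {j. j \<in> G} = G" using G by auto
    also have "{..<m} \<inter> - {j. j \<in> G} = {..<m} - G" by auto
    finally have e: "(\<Prod>j<m. d j) = (\<Prod>_\<in>G. q - 1) * (\<Prod>_\<in>{..<m} - G. q)" .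
    have "card ({..<m} - G) = m - card G" using G by (simp add: card_Diff_subset finite_subset)
    then show ?thesis using e by simp
  qed
  finally have cS: "card S \<le> 2 * ((q - 1) ^ card G * q ^ (m - card G))" .
  have gm: "card G \<le> m" using card_mono[OF _ G] by simp
  have qpos: "real q > 0" using q3 by simp
  have "real (card S) \<le> real (2 * ((q - 1) ^ card G * q ^ (m - card G)))"
    using cS by (simp only: of_nat_le_iff)
  also have "\<dots> = 2 * (real (q - 1) ^ card G * real q ^ (m - card G))" by simp
  also have "real q ^ (m - card G) = real q ^ m / real q ^ card G"
    using gm qpos by (simp add: power_diff)
  also have "2 * (real (q - 1) ^ card G * (real q ^ m / real q ^ card G))
     = 2 * real q ^ m * (real (q - 1) / real q) ^ card G"
    by (simp add: power_divide)
  finally have fin: "real (card S) \<le> 2 * real q ^ m * (real (q - 1) / real q) ^ card G" .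
  have "q - 1 = 2 * k - 2" by (simp add: q_def)
  then show ?thesis using fin unfolding q_def by simp
qed



lemma mod_add_lt: fixes i n m :: nat shows "i < m \<Longrightarrow> n < m \<Longrightarrow> (i + n) mod m = (if i + n < m then i + n else i + n - m)"
proof (cases "i + n < m")
  case False
  assume "i < m" "n < m"
  then have "(i + n) mod m = (i + n - m) mod m" using False le_mod_geq[of m "i + n"] by simp
  also have "\<dots> = i + n - m" using \<open>i < m\<close> \<open>n < m\<close> by simp
  finally show ?thesis using False by simp
qed simp

lemma forced_bound:
  assumes k: "k \<ge> 2" and f: "inj_on f (letters k)" and Lm: "L \<le> m"
    and p: "\<forall>i<L. p i < m" and pinj: "inj_on p {..<L}"
  shows "\<exists>g. card {i. i < L \<and> p i \<noteq> i} \<le> 2 * g \<and>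
     real (card {x \<in> W k m. \<forall>i<L. x ! i = f (x ! p i)})
       \<le> 2 * real (2 * k - 1) ^ m * (real (2 * k - 2) / real (2 * k - 1)) ^ g"
proof -
  define S where "S = {x \<in> W k m. \<forall>i<L. x ! i = f (x ! p i)}"
  define D where "D = {i. i < L \<and> p i \<noteq> i}"
  define F where "F = (\<lambda>i. max i (p i)) ` D"
  have finD: "finite D" by (simp add: D_def)
  have FG: "F \<subseteq> {..<m}" using p Lm by (auto simp: F_def D_def)
  have bdF: "\<forall>j\<in>F. \<forall>x\<in>S. card (ext S j x) \<le> 2 * k - 2"
  proof (intro ballI)
    fix j x assume j: "j \<in> F" and x: "x \<in> S"
    then obtain i where i: "i < L" "p i \<noteq> i" "j = max i (p i)" by (auto simp: F_def D_def)
    have jm: "j < m" using j FG by auto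
    have "ext S j x \<subseteq> {x ! j}"
    proof
      fix a assume "a \<in> ext S j x"
      then obtain y where y: "y \<in> S" "take j y = take j x" "a = y ! j" by (auto simp: ext_def)
      have ly: "length y = m" "fword k y" and lx: "length x = m" "fword k x"
        using y x by (auto simp: S_def W_def)
      have tk: "y ! t = x ! t" if "t < j" for t
      proof -
        have "y ! t = take j y ! t" using that by simp
        also have "\<dots> = x ! t" using y that by simp
        finally show ?thesis .
      qed
      show "a \<in> {x ! j}"
      proof (cases "p i < i")
        case True
        then have ji: "j = i" using i by simp
        have "y ! i = f (y ! p i)" "x ! i = f (x ! p i)" using y x i by (auto simp: S_def)
        then show ?thesis using tk[of "p i"] True ji y by simp
      next
        case False
        then have ji: "j = p i" "i < j" using i by auto
        have "y ! i = f (y ! p i)" "x ! i = f (x ! p i)" using y x i by (auto simp: S_def)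
        then have "f (y ! j) = f (x ! j)" using tk[of i] ji by simp
        moreover have "y ! j \<in> letters k" "x ! j \<in> letters k" using ly lx jm fword_nth by auto
        ultimately show ?thesis using f y by (auto dest: inj_onD)
      qed
    qed
    then have "card (ext S j x) \<le> 1" using card_mono[of "{x ! j}"] by simp
    then show "card (ext S j x) \<le> 2 * k - 2" using k by simp
  qed
  have b: "real (card S) \<le> 2 * real (2 * k - 1) ^ m * (real (2 * k - 2) / real (2 * k - 1)) ^ card F"
    by (rule UB[OF k _ FG bdF]) (auto simp: S_def)
  have "card D \<le> 2 * card F"
  proof -
    have "D \<subseteq> (\<Union>v\<in>F. {i \<in> D. max i (p i) = v})" by (auto simp: F_def)
    then have "card D \<le> card (\<Union>v\<in>F. {i \<in> D. max i (p i) = v})"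
      by (rule card_mono[rotated]) (simp add: F_def finD)
    also have "\<dots> \<le> (\<Sum>v\<in>F. card {i \<in> D. max i (p i) = v})"
      by (rule card_UN_le) (simp add: F_def finD)
    also have "\<dots> \<le> (\<Sum>v\<in>F. 2)"
    proof (rule sum_mono)
      fix v assume "v \<in> F"
      have sub: "{i \<in> D. max i (p i) = v} \<subseteq> {v} \<union> {i \<in> D. p i = v}" by auto
      have "card {i \<in> D. p i = v} \<le> Suc 0"
        using pinj finD by (subst card_le_Suc0_iff_eq) (auto simp: D_def dest: inj_onD)
      then have "card ({v} \<union> {i \<in> D. p i = v}) \<le> 2"
        using card_Un_le[of "{v}" "{i \<in> D. p i = v}"] by simp
      have "finite ({v} \<union> {i \<in> D. p i = v})" using finD by simp
      from card_mono[OF this sub] show "card {i \<in> D. max i (p i) = v} \<le> 2"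
        using \<open>card ({v} \<union> {i \<in> D. p i = v}) \<le> 2\<close> by linarith
    qed
    finally show ?thesis by simp
  qed
  then show ?thesis using b by (auto simp: S_def D_def)
qed

lemma fixed_bound:
  assumes k: "k \<ge> 2" and Lm: "L \<le> m" and a: "a \<in> letters k" "\<sigma> a \<noteq> a"
    and comp: "\<forall>b\<in>letters k. \<sigma> (inv_letter b) = inv_letter (\<sigma> b)"
  shows "real (card {x \<in> W k m. \<forall>i<L. x ! i = \<sigma> (x ! i)})
       \<le> 2 * real (2 * k - 1) ^ m * (real (2 * k - 2) / real (2 * k - 1)) ^ L"
proof -
  define S where "S = {x \<in> W k m. \<forall>i<L. x ! i = \<sigma> (x ! i)}"
  have fixsub: "{b \<in> letters k. \<sigma> b = b} \<subseteq> letters k - {a, inv_letter a}"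
  proof -
    have "\<sigma> (inv_letter a) \<noteq> inv_letter a" using comp a by (auto simp: inv_inj)
    then show ?thesis using a(2) by blast
  qed
  have cfix: "card {b \<in> letters k. \<sigma> b = b} \<le> 2 * k - 2"
  proof -
    have "card (letters k - {a, inv_letter a}) = 2 * k - 2"
      using a inv_letters[OF a(1)] by (simp add: card_letters finite_letters card_Diff_subset)
    then show ?thesis using card_mono[OF _ fixsub] finite_letters by simp
  qed
  have "\<forall>j\<in>{..<L}. \<forall>x\<in>S. card (ext S j x) \<le> 2 * k - 2"
  proof (intro ballI)
    fix j x assume j: "j \<in> {..<L}" and x: "x \<in> S"
    have "ext S j x \<subseteq> {b \<in> letters k. \<sigma> b = b}"
    proof
      fix b assume "b \<in> ext S j x"
      then obtain y where y: "y \<in> S" "b = y ! j" by (auto simp: ext_def)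
      then have "y ! j = \<sigma> (y ! j)" "y ! j \<in> letters k" using j Lm by (auto simp: S_def W_def intro: fword_nth)
      then show "b \<in> {b \<in> letters k. \<sigma> b = b}" using y by simp
    qed
    moreover have "finite {b \<in> letters k. \<sigma> b = b}" using finite_letters by simp
    ultimately have "card (ext S j x) \<le> card {b \<in> letters k. \<sigma> b = b}" using card_mono by blast
    then show "card (ext S j x) \<le> 2 * k - 2" using cfix by linarith
  qed
  from UB[OF k _ _ this] Lm show ?thesis by (auto simp: S_def)
qed



lemma lcp_le: "l \<le> lcp x y \<Longrightarrow> l \<le> length x \<and> (\<forall>i<l. x ! i = y ! i)"
proof (induction x y arbitrary: l rule: lcp.induct)
  case (1 a u b v)
  show ?case
  proof (cases "a = b")
    case True
    show ?thesis
    proof (cases l)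
      case (Suc l')
      then have "l' \<le> lcp u v" using 1(2) True by simp
      from 1(1)[OF True this] have "l' \<le> length u \<and> (\<forall>i<l'. u ! i = v ! i)" .
      then show ?thesis using Suc True by (auto simp: less_Suc_eq_0_disj)
    qed simp
  next
    case False
    then show ?thesis using 1(2) by simp
  qed
qed auto

lemma rot_inj: fixes n m :: nat assumes "n < m"
  shows "inj_on (\<lambda>i. (i + n) mod m) {..<m}"
proof (rule inj_onI)
  fix i j assume "i \<in> {..<m}" "j \<in> {..<m}" "(i + n) mod m = (j + n) mod m"
  then show "i = j" using mod_add_lt[of i m n] mod_add_lt[of j m n] assms
    by (auto split: if_splits)
qed

lemma rot_nofix: fixes n m i :: nat assumes "0 < n" "n < m" "i < m"
  shows "(i + n) mod m \<noteq> i"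
  using mod_add_lt[of i m n] assms by (auto split: if_splits)

definition Qr :: "nat \<Rightarrow> real" where "Qr k = real (2 * k - 1)"
definition th :: "nat \<Rightarrow> real" where "th k = real (2 * k - 2) / real (2 * k - 1)"

definition famA :: "nat \<Rightarrow> nat \<Rightarrow> nat \<Rightarrow> (letter \<Rightarrow> letter) \<Rightarrow> nat \<Rightarrow> letter list set" where
  "famA k m L \<tau> n = {x \<in> W k m. \<forall>i<L. x ! i = \<tau> (x ! ((i + n) mod m))}"
definition famB :: "nat \<Rightarrow> nat \<Rightarrow> nat \<Rightarrow> (letter \<Rightarrow> letter) \<Rightarrow> letter list set" where
  "famB k m L \<tau> = {x \<in> W k m. \<forall>i<L. x ! i = \<tau> (x ! i)}"
definition famC :: "nat \<Rightarrow> nat \<Rightarrow> nat \<Rightarrow> (letter \<Rightarrow> letter) \<Rightarrow> nat \<Rightarrow> letter list set" where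
  "famC k m L \<tau> n = {x \<in> W k m. \<forall>i<L. x ! i = \<tau> (inv_letter (x ! (m - 1 - (i + n) mod m)))}"

lemma famA_bound:
  assumes k: "k \<ge> 2" and "inj_on \<tau> (letters k)" "L \<le> m" "0 < n" "n < m"
  shows "\<exists>g. L \<le> 2 * g \<and> real (card (famA k m L \<tau> n)) \<le> 2 * Qr k ^ m * th k ^ g"
proof -
  have "\<forall>i<L. (i + n) mod m < m" using assms by simp
  moreover have "inj_on (\<lambda>i. (i + n) mod m) {..<L}"
    using rot_inj[of n m] assms by (auto intro: inj_on_subset)
  ultimately obtain g where g: "card {i. i < L \<and> (i + n) mod m \<noteq> i} \<le> 2 * g"
    "real (card (famA k m L \<tau> n)) \<le> 2 * Qr k ^ m * th k ^ g"
    using forced_bound[OF k assms(2,3), of "\<lambda>i. (i + n) mod m"] by (auto simp: famA_def Qr_def th_def)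
  have "{i. i < L \<and> (i + n) mod m \<noteq> i} = {..<L}" using rot_nofix[of n m] assms by auto
  then show ?thesis using g by auto
qed

lemma famB_bound:
  assumes k: "k \<ge> 2" and "L \<le> m" "a \<in> letters k" "\<tau> a \<noteq> a"
    "\<forall>b\<in>letters k. \<tau> (inv_letter b) = inv_letter (\<tau> b)"
  shows "\<exists>g. L \<le> 2 * g \<and> real (card (famB k m L \<tau>)) \<le> 2 * Qr k ^ m * th k ^ g"
  using fixed_bound[OF k assms(2-5)] by (intro exI[of _ L]) (auto simp: famB_def Qr_def th_def)

lemma famC_bound:
  assumes k: "k \<ge> 2" and inj: "inj_on \<tau> (letters k)" and Lm: "L \<le> m" and nm: "n < m"
  shows "\<exists>g. L \<le> 2 * g + 2 \<and> real (card (famC k m L \<tau> n)) \<le> 2 * Qr k ^ m * th k ^ g"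
proof -
  define p where "p i = m - 1 - (i + n) mod m" for i
  have m0: "m > 0" using nm by simp
  have pm: "\<forall>i<L. p i < m" using m0 by (simp add: p_def)
  have "inj_on p {..<m}"
  proof (rule inj_onI)
    fix i j assume ij: "i \<in> {..<m}" "j \<in> {..<m}" "p i = p j"
    have "(i + n) mod m < m" "(j + n) mod m < m" using m0 by auto
    then have "(i + n) mod m = (j + n) mod m" using ij(3) unfolding p_def by linarith
    then show "i = j" using rot_inj[OF nm] ij by (auto dest: inj_onD)
  qed
  then have pinj: "inj_on p {..<L}" using Lm by (auto intro: inj_on_subset)
  have finj: "inj_on (\<lambda>a. \<tau> (inv_letter a)) (letters k)"
  proof (rule inj_onI)
    fix a b assume "a \<in> letters k" "b \<in> letters k" "\<tau> (inv_letter a) = \<tau> (inv_letter b)"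
    then have "inv_letter a = inv_letter b" using inj inv_letters[of a k] inv_letters[of b k] by (meson inj_onD)
    then show "a = b" by (simp add: inv_inj)
  qed
  obtain g where g: "card {i. i < L \<and> p i \<noteq> i} \<le> 2 * g"
    "real (card {x \<in> W k m. \<forall>i<L. x ! i = \<tau> (inv_letter (x ! p i))}) \<le> 2 * Qr k ^ m * th k ^ g"
    using forced_bound[OF k finj Lm pm pinj] by (auto simp: Qr_def th_def)
  have fx: "{i. i < L \<and> p i = i} \<subseteq> {i. 2 * i + n = m - 1} \<union> {i. 2 * i + n = 2 * m - 1}"
  proof
    fix i assume "i \<in> {i. i < L \<and> p i = i}"
    then have i: "i < m" "p i = i" using Lm by auto
    then show "i \<in> {i. 2 * i + n = m - 1} \<union> {i. 2 * i + n = 2 * m - 1}"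
      using mod_add_lt[of i m n] nm unfolding p_def by (auto split: if_splits)
  qed
  have c1: "card {i. 2 * i + n = c} \<le> 1" for c
  proof -
    have "{i. 2 * i + n = c} \<subseteq> {(c - n) div 2}" by auto
    from card_mono[OF _ this] show ?thesis by simp
  qed
  have fin2: "finite ({i. 2 * i + n = m - 1} \<union> {i. 2 * i + n = 2 * m - 1})"
  proof -
    have "{i. 2 * i + n = m - 1} \<union> {i. 2 * i + n = 2 * m - 1} \<subseteq> {..2 * m}" by auto
    then show ?thesis using finite_subset by blast
  qed
  have "card {i. i < L \<and> p i = i} \<le> card ({i. 2 * i + n = m - 1} \<union> {i. 2 * i + n = 2 * m - 1})"
    by (rule card_mono[OF fin2 fx])
  also have "\<dots> \<le> 2" using card_Un_le[of "{i. 2 * i + n = m - 1}" "{i. 2 * i + n = 2 * m - 1}"] c1[of "m - 1"] c1[of "2 * m - 1"]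
    by linarith
  finally have cf: "card {i. i < L \<and> p i = i} \<le> 2" .
  have "{i. i < L \<and> p i \<noteq> i} = {..<L} - {i. i < L \<and> p i = i}" by auto
  then have "card {i. i < L \<and> p i \<noteq> i} \<ge> L - 2"
    using diff_card_le_card_Diff[of "{i. i < L \<and> p i = i}" "{..<L}"] cf by simp
  then have "L \<le> 2 * g + 2" using g(1) by linarith
  moreover have "famC k m L \<tau> n = {x \<in> W k m. \<forall>i<L. x ! i = \<tau> (inv_letter (x ! p i))}"
    by (simp add: famC_def p_def)
  ultimately show ?thesis using g(2) by auto
qed



definition PE :: "nat \<Rightarrow> (letter \<Rightarrow> letter) set" where
  "PE k = letters k \<rightarrow>\<^sub>E letters k"
definition R1 :: "nat \<Rightarrow> (letter \<Rightarrow> letter) set" where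
  "R1 k = {\<tau> \<in> PE k. inj_on \<tau> (letters k)}"
definition Rf :: "nat \<Rightarrow> (letter \<Rightarrow> letter) set" where
  "Rf k = {\<tau> \<in> PE k. (\<exists>a\<in>letters k. \<tau> a \<noteq> a) \<and> (\<forall>b\<in>letters k. \<tau> (inv_letter b) = inv_letter (\<tau> b))}"
definition LL :: "real \<Rightarrow> nat \<Rightarrow> nat" where
  "LL lam m = nat \<lceil>lam * real m\<rceil>"
definition Bad :: "nat \<Rightarrow> real \<Rightarrow> nat \<Rightarrow> letter list set" where
  "Bad k lam m = {x. cyc_reduced k x \<and> length x = m \<and> x \<notin> Eset k lam}"

lemma finite_PE: "finite (PE k)"
  by (simp add: PE_def finite_PiE finite_letters)

lemma restrict_R1: "relabeling k \<sigma> \<Longrightarrow> restrict \<sigma> (letters k) \<in> R1 k"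
  by (auto simp: R1_def PE_def relabeling_def bij_betw_def inj_on_restrict_eq restrict_PiE_iff)

lemma id_R1: "restrict id (letters k) \<in> R1 k"
  by (auto simp: R1_def PE_def restrict_PiE_iff inj_on_restrict_eq)

lemma restrict_Rf: assumes "relabeling k \<sigma>" "nontrivial_on k \<sigma>"
  shows "restrict \<sigma> (letters k) \<in> Rf k"
proof -
  have "restrict \<sigma> (letters k) \<in> PE k" using restrict_R1[OF assms(1)] by (simp add: R1_def)
  moreover have "\<exists>a\<in>letters k. restrict \<sigma> (letters k) a \<noteq> a" using assms(2) by (auto simp: nontrivial_on_def)
  moreover have "\<forall>b\<in>letters k. restrict \<sigma> (letters k) (inv_letter b) = inv_letter (restrict \<sigma> (letters k) b)"
    using assms(1) inv_letters by (auto simp: relabeling_def)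
  ultimately show ?thesis by (simp add: Rf_def)
qed

lemma LL_le: "0 < lam \<Longrightarrow> lam < 1 \<Longrightarrow> LL lam m \<le> m"
proof -
  assume "0 < lam" "lam < 1"
  then have "lam * real m \<le> real m" using mult_right_mono[of lam 1 "real m"] by simp
  then have "\<lceil>lam * real m\<rceil> \<le> int m" by (simp add: ceiling_le)
  then show ?thesis by (simp add: LL_def nat_le_iff)
qed

lemma LL_ge: "lam * real m \<le> real (LL lam m)"
proof -
  have 1: "lam * real m \<le> of_int \<lceil>lam * real m\<rceil>" by (rule le_of_int_ceiling)
  have 2: "(of_int \<lceil>lam * real m\<rceil> :: real) \<le> real (nat \<lceil>lam * real m\<rceil>)"
    by (cases "0 \<le> \<lceil>lam * real m\<rceil>") auto
  show ?thesis using 1 2 unfolding LL_def by linarith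
qed

lemma famA_mem: assumes "x \<in> W k m" "0 < m" "\<forall>i<L. x ! i = \<sigma> (x ! ((i + n) mod m))"
  shows "x \<in> famA k m L (restrict \<sigma> (letters k)) n"
proof -
  have "x ! ((i + n) mod m) \<in> letters k" for i
    using assms(1,2) fword_nth by (auto simp: W_def)
  then show ?thesis using assms by (auto simp: famA_def)
qed



lemma cover:
  assumes k: "k \<ge> 2" and lam: "0 < lam" "lam < 1" and m: "m \<ge> 1"
  shows "Bad k lam m \<subseteq> (\<Union>\<tau>\<in>R1 k. \<Union>n\<in>{1..<m}. famA k m (LL lam m) \<tau> n)
     \<union> (\<Union>\<tau>\<in>Rf k. famB k m (LL lam m) \<tau>) \<union> (\<Union>\<tau>\<in>R1 k. \<Union>n\<in>{..<m}. famC k m (LL lam m) \<tau> n)"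
    (is "_ \<subseteq> ?U")
proof
  fix x assume "x \<in> Bad k lam m"
  then have cr: "cyc_reduced k x" and lx: "length x = m" and nE: "x \<notin> Eset k lam"
    by (auto simp: Bad_def)
  define L where "L = LL lam m"
  have Lm: "L \<le> m" using LL_le lam by (simp add: L_def)
  have xW: "x \<in> W k m" using cr lx by (simp add: W_def cyc_reduced_def)
  have m0: "0 < m" using m by simp
  have xl: "\<And>j. j < m \<Longrightarrow> x ! j \<in> letters k" using xW fword_nth by (auto simp: W_def)
  have hA: "x \<in> ?U" if "\<tau> \<in> R1 k" "n \<in> {1..<m}" "x \<in> famA k m L \<tau> n" for \<tau> n
    by (rule UnI1, rule UnI1, rule UN_I[OF that(1)], rule UN_I[OF that(2)]) (use that in \<open>simp add: L_def\<close>)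
  have hB: "x \<in> ?U" if "\<tau> \<in> Rf k" "x \<in> famB k m L \<tau>" for \<tau>
    by (rule UnI1, rule UnI2, rule UN_I[OF that(1)]) (use that in \<open>simp add: L_def\<close>)
  have hC: "x \<in> ?U" if "\<tau> \<in> R1 k" "n \<in> {..<m}" "x \<in> famC k m L \<tau> n" for \<tau> n
    by (rule UnI2, rule UN_I[OF that(1)], rule UN_I[OF that(2)]) (use that in \<open>simp add: L_def\<close>)
  have rotA: "x \<in> ?U" if n: "0 < n" "n < m" and eq: "\<forall>i<L. x ! i = x ! ((i + n) mod m)" for n
  proof -
    have "x \<in> famA k m L (restrict id (letters k)) n" using famA_mem[OF xW m0, of L id n] eq by simp
    then show ?thesis using id_R1[of k] n by (intro hA) auto
  qed
  have rn: "rotate n xs ! i = xs ! ((i + n mod m) mod m)" if "length xs = m" "i < m" for n i and xs :: "letter list"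
  proof -
    have "rotate n xs ! i = xs ! ((n + i) mod m)" using that by (simp add: nth_rotate)
    moreover have "(n + i) mod m = (i + n mod m) mod m"
      by (metis add.commute mod_add_right_eq)
    ultimately show ?thesis by simp
  qed
  show "x \<in> ?U"
  proof (cases "proper_power k x")
    case True
    have "x \<noteq> []" using lx m by auto
    then obtain w j where wj: "j \<ge> 2" "w \<noteq> []" "x = concat (replicate j w)"
      using proper_power_struct[OF cr True] by blast
    have "length (concat (replicate j w)) = j * length w" by (simp add: length_concat sum_list_replicate)
    then have lm: "m = j * length w" using lx wj(3) by simp
    have w0: "0 < length w" using wj(2) by simp
    have "2 * length w \<le> j * length w" using wj(1) by (rule mult_right_mono) simp
    then have n: "0 < length w" "length w < m" using w0 lm by linarith+
    have rot: "rotate (length w) x = x" using rotate_pow[of j w] wj by simp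
    have "\<forall>i<L. x ! i = x ! ((i + length w) mod m)"
    proof (intro allI impI)
      fix i assume "i < L"
      then have "i < m" using Lm by simp
      then have "rotate (length w) x ! i = x ! ((length w + i) mod m)"
        using lx by (simp add: nth_rotate)
      then have "rotate (length w) x ! i = x ! ((i + length w) mod m)"
        by (simp only: add.commute)
      then show "x ! i = x ! ((i + length w) mod m)" using rot by simp
    qed
    then show ?thesis by (rule rotA[OF n])
  next
    case False
    then obtain y where y: "y \<in> Yset k x" "\<not> real (lcp x y) < lam * real (length x)"
      using nE cr by (auto simp: Eset_def)
    have "L \<le> lcp x y"
    proof -
      have "lam * real m \<le> real (lcp x y)" using y lx by simp
      then have "\<lceil>lam * real m\<rceil> \<le> int (lcp x y)" by (simp add: ceiling_le)
      then show ?thesis by (simp add: L_def LL_def nat_le_iff)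
    qed
    then have agree: "\<forall>i<L. x ! i = y ! i" using lcp_le by blast
    from y(1) consider
        (a) \<sigma> n where "relabeling k \<sigma>" "nontrivial_on k \<sigma>" "y = rotate n (map \<sigma> x)"
      | (b) \<sigma> n where "relabeling k \<sigma>" "y = rotate n (map \<sigma> (word_inv x))"
      | (c) n where "0 < n" "n < length x" "y = rotate n x"
      unfolding Yset_def by blast
    then show ?thesis
    proof cases
      case (a \<sigma> n)
      define n' where "n' = n mod m"
      have n'm: "n' < m" using m0 by (simp add: n'_def)
      have ya: "\<forall>i<L. x ! i = \<sigma> (x ! ((i + n') mod m))"
        using agree a(3) rn[of "map \<sigma> x"] lx Lm n'm by (auto simp: n'_def)
      show ?thesis
      proof (cases "n' = 0")
        case True
        have "\<forall>i<L. x ! i = restrict \<sigma> (letters k) (x ! i)"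
          using ya True Lm xl by auto
        then have "x \<in> famB k m L (restrict \<sigma> (letters k))" using xW by (simp add: famB_def)
        then show ?thesis using restrict_Rf[OF a(1,2)] by (intro hB)
      next
        case False
        have "x \<in> famA k m L (restrict \<sigma> (letters k)) n'" using famA_mem[OF xW m0 ya] .
        then show ?thesis using restrict_R1[OF a(1)] False n'm by (intro hA) auto
      qed
    next
      case (b \<sigma> n)
      define n' where "n' = n mod m"
      have n'm: "n' < m" using m0 by (simp add: n'_def)
      have "\<forall>i<L. x ! i = restrict \<sigma> (letters k) (inv_letter (x ! (m - 1 - (i + n') mod m)))"
      proof (intro allI impI)
        fix i assume i: "i < L"
        then have im: "i < m" using Lm by simp
        define t where "t = (i + n') mod m"
        have tm: "t < m" using m0 by (simp add: t_def)
        have "y ! i = map \<sigma> (word_inv x) ! t"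
          using b(2) rn[of "map \<sigma> (word_inv x)" i n] im lx by (simp add: word_inv_def t_def n'_def)
        also have "\<dots> = \<sigma> (inv_letter (x ! (m - 1 - t)))"
          using tm lx by (simp add: word_inv_def rev_nth)
        finally have "x ! i = \<sigma> (inv_letter (x ! (m - 1 - t)))" using agree i by simp
        moreover have "inv_letter (x ! (m - 1 - t)) \<in> letters k" using xl m0 inv_letters by simp
        ultimately show "x ! i = restrict \<sigma> (letters k) (inv_letter (x ! (m - 1 - (i + n') mod m)))"
          by (simp add: t_def)
      qed
      then have "x \<in> famC k m L (restrict \<sigma> (letters k)) n'" using xW by (simp add: famC_def)
      then show ?thesis using restrict_R1[OF b(1)] n'm by (intro hC) auto
    next
      case (c n)
      have "\<forall>i<L. x ! i = x ! ((i + n) mod m)"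
        using agree c lx Lm by (auto simp: nth_rotate add.commute)
      then show ?thesis using c lx by (intro rotA) auto
    qed
  qed
qed



lemma card_UN_real:
  assumes "finite I" "\<forall>i\<in>I. real (card (A i)) \<le> b"
  shows "real (card (\<Union>i\<in>I. A i)) \<le> real (card I) * b"
proof -
  have "card (\<Union>i\<in>I. A i) \<le> (\<Sum>i\<in>I. card (A i))" by (rule card_UN_le[OF assms(1)])
  then have "real (card (\<Union>i\<in>I. A i)) \<le> (\<Sum>i\<in>I. real (card (A i)))"
    by (metis of_nat_le_iff of_nat_sum)
  also have "\<dots> \<le> (\<Sum>i\<in>I. b)" by (rule sum_mono) (use assms(2) in auto)
  finally show ?thesis by simp
qed

lemma th_pos: "k \<ge> 2 \<Longrightarrow> 0 < th k" by (simp add: th_def)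
lemma th_le1: "k \<ge> 2 \<Longrightarrow> th k \<le> 1" by (simp add: th_def)
lemma th_lt1: "k \<ge> 2 \<Longrightarrow> th k < 1" by (simp add: th_def)
lemma Qr_ge: "k \<ge> 2 \<Longrightarrow> Qr k \<ge> 3" by (simp add: Qr_def)

lemma th_pow_bound:
  assumes k: "k \<ge> 2" and "real L \<le> 2 * real g + 2" and "lam * real m \<le> real L"
  shows "th k ^ g \<le> th k powr ((lam * real m - 2) / 2)"
proof -
  have "th k ^ g = th k powr real g" using th_pos[OF k] by (simp add: powr_realpow)
  also have "\<dots> \<le> th k powr ((lam * real m - 2) / 2)"
    by (rule powr_mono') (use assms th_pos[OF k] th_le1[OF k] in auto)
  finally show ?thesis .
qed

lemma bad_count:
  assumes k: "k \<ge> 2" and lam: "0 < lam" "lam < 1" and m: "m \<ge> 1"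
  shows "real (card (Bad k lam m)) \<le> (2 * real (card (PE k)) * real m + real (card (PE k)))
            * (2 * Qr k ^ m * th k powr ((lam * real m - 2) / 2))"
proof -
  define L where "L = LL lam m"
  define B where "B = 2 * Qr k ^ m * th k powr ((lam * real m - 2) / 2)"
  define N where "N = card (PE k)"
  have Lm: "L \<le> m" using LL_le lam by (simp add: L_def)
  have Lge: "lam * real m \<le> real L" using LL_ge by (simp add: L_def)
  have B0: "0 \<le> B" unfolding B_def using Qr_ge[OF k] by simp
  have conv: "real c \<le> B" if ex: "\<exists>g. L \<le> 2 * g + 2 \<and> real c \<le> 2 * Qr k ^ m * th k ^ g" for c
  proof -
    obtain g where g: "L \<le> 2 * g + 2" "real c \<le> 2 * Qr k ^ m * th k ^ g" using ex by blast
    have "th k ^ g \<le> th k powr ((lam * real m - 2) / 2)"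
      by (rule th_pow_bound[OF k _ Lge]) (use g(1) in linarith)
    then have "2 * Qr k ^ m * th k ^ g \<le> B" unfolding B_def
      using Qr_ge[OF k] by (intro mult_left_mono) auto
    then show ?thesis using g(2) by linarith
  qed
  have cR1: "card (R1 k) \<le> N" unfolding N_def R1_def by (rule card_mono[OF finite_PE]) auto
  have cRf: "card (Rf k) \<le> N" unfolding N_def Rf_def by (rule card_mono[OF finite_PE]) auto
  have fR1: "finite (R1 k)" "finite (Rf k)" using finite_PE by (auto simp: R1_def Rf_def)
  define UA where "UA = (\<Union>\<tau>\<in>R1 k. \<Union>n\<in>{1..<m}. famA k m L \<tau> n)"
  define UB where "UB = (\<Union>\<tau>\<in>Rf k. famB k m L \<tau>)"
  define UC where "UC = (\<Union>\<tau>\<in>R1 k. \<Union>n\<in>{..<m}. famC k m L \<tau> n)"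
  have sub: "Bad k lam m \<subseteq> UA \<union> UB \<union> UC" using cover[OF k lam m] by (simp add: UA_def UB_def UC_def L_def)
  have finU: "finite (UA \<union> UB \<union> UC)"
  proof (rule finite_subset[OF _ finite_W])
    show "UA \<union> UB \<union> UC \<subseteq> W k m" by (auto simp: UA_def UB_def UC_def famA_def famB_def famC_def)
  qed
  have "real (card UA) \<le> real (card (R1 k)) * (real (card {1..<m}) * B)"
    unfolding UA_def
  proof (rule card_UN_real[OF fR1(1)], intro ballI)
    fix \<tau> assume t: "\<tau> \<in> R1 k"
    show "real (card (\<Union>n\<in>{1..<m}. famA k m L \<tau> n)) \<le> real (card {1..<m}) * B"
    proof (rule card_UN_real, simp, intro ballI)
      fix n assume "n \<in> {1..<m}"
      then show "real (card (famA k m L \<tau> n)) \<le> B"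
        using famA_bound[OF k _ Lm, of \<tau> n] t by (intro conv) (force simp: R1_def)
    qed
  qed
  also have "\<dots> \<le> real N * (real m * B)"
    using cR1 B0 by (intro mult_mono) auto
  finally have cA: "real (card UA) \<le> real N * (real m * B)" .
  have "real (card UB) \<le> real (card (Rf k)) * B"
    unfolding UB_def
  proof (rule card_UN_real[OF fR1(2)], intro ballI)
    fix \<tau> assume t: "\<tau> \<in> Rf k"
    then obtain a where "a \<in> letters k" "\<tau> a \<noteq> a" "\<forall>b\<in>letters k. \<tau> (inv_letter b) = inv_letter (\<tau> b)"
      by (auto simp: Rf_def)
    from famB_bound[OF k Lm this] show "real (card (famB k m L \<tau>)) \<le> B"
      by (intro conv) force
  qed
  also have "\<dots> \<le> real N * B" using cRf B0 by (intro mult_right_mono) auto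
  finally have cB: "real (card UB) \<le> real N * B" .
  have "real (card UC) \<le> real (card (R1 k)) * (real (card {..<m}) * B)"
    unfolding UC_def
  proof (rule card_UN_real[OF fR1(1)], intro ballI)
    fix \<tau> assume t: "\<tau> \<in> R1 k"
    show "real (card (\<Union>n\<in>{..<m}. famC k m L \<tau> n)) \<le> real (card {..<m}) * B"
    proof (rule card_UN_real, simp, intro ballI)
      fix n assume "n \<in> {..<m}"
      then show "real (card (famC k m L \<tau> n)) \<le> B"
        using famC_bound[OF k _ Lm, of \<tau> n] t by (intro conv) (force simp: R1_def)
    qed
  qed
  also have "\<dots> \<le> real N * (real m * B)"
    using cR1 B0 by (intro mult_mono) auto
  finally have cC: "real (card UC) \<le> real N * (real m * B)" .
  have "card (Bad k lam m) \<le> card (UA \<union> UB \<union> UC)" by (rule card_mono[OF finU sub])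
  also have "\<dots> \<le> card UA + card UB + card UC"
    by (metis card_Un_le add_le_mono le_trans order_refl)
  finally have "real (card (Bad k lam m)) \<le> real (card UA) + real (card UB) + real (card UC)"
    by linarith
  also have "\<dots> \<le> (2 * real N * real m + real N) * B" using cA cB cC by (simp add: algebra_simps)
  finally show ?thesis by (simp add: N_def B_def)
qed



lemma fr_replicate: "freely_reduced (replicate r c)"
  by (induction r) (auto simp: fr_Cons)

definition CRn :: "nat \<Rightarrow> nat \<Rightarrow> letter list set" where
  "CRn k n = {x. cyc_reduced k x \<and> length x = n}"

lemma CRn_W: "CRn k n \<subseteq> W k n" by (auto simp: CRn_def W_def cyc_reduced_def)

lemma card_ext_ge1: assumes "S \<subseteq> W k n" "j < n" "x \<in> S" shows "1 \<le> card (ext S j x)"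
proof -
  have "x ! j \<in> ext S j x" using assms by (auto simp: ext_def)
  moreover have "finite (ext S j x)" using ext_sub_letters[OF assms(1,2)] finite_letters finite_subset by blast
  ultimately show ?thesis by (metis One_nat_def Suc_leI card_gt_0_iff empty_iff)
qed

lemma exists_other: assumes k: "k \<ge> 2" shows "\<exists>c\<in>letters k. c \<noteq> u \<and> c \<noteq> v"
proof -
  have "card (letters k - {u, v}) \<ge> card (letters k) - card {u, v}"
    by (rule diff_card_le_card_Diff) simp
  moreover have "card {u, v} \<le> 2" by (simp add: card_insert_le_m1)
  ultimately have "card (letters k - {u, v}) > 0" using k card_letters[of k] by linarith
  then obtain c where "c \<in> letters k - {u, v}" by (metis card.empty ex_in_conv less_irrefl)
  then show ?thesis by auto
qed

lemma CR_ext: assumes k: "k \<ge> 2" and j: "0 < j" "Suc j < n" and x: "x \<in> CRn k n"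
  shows "letters k - {inv_letter (x ! (j - 1))} \<subseteq> ext (CRn k n) j x"
proof
  fix b assume b: "b \<in> letters k - {inv_letter (x ! (j - 1))}"
  have xs: "fword k x" "freely_reduced x" "length x = n" "last x \<noteq> inv_letter (hd x)" "x \<noteq> []"
    using x j by (auto simp: CRn_def cyc_reduced_def fword_def)
  obtain c where c: "c \<in> letters k" "c \<noteq> inv_letter b" "c \<noteq> inv_letter (hd x)"
    using exists_other[OF k] by blast
  define r where "r = n - j - 1"
  have r1: "r \<ge> 1" using j by (simp add: r_def)
  define z where "z = take j x @ [b] @ replicate r c"
  have tne: "take j x \<noteq> []" using j xs by simp
  have lt: "last (take j x) = x ! (j - 1)" using j xs by (simp add: last_conv_nth min_def)
  have ht: "hd (take j x) = hd x" using j xs by (simp add: hd_take)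
  have frt: "freely_reduced (take j x)"
    using xs(2) fr_append[of "take j x" "drop j x"] by simp
  have frz: "freely_reduced z" unfolding z_def
    using frt tne lt b c r1 fr_replicate[of r c] by (auto simp: fr_append fr_Cons hd_replicate)
  have setz: "set z \<subseteq> letters k" unfolding z_def using xs(1) b c
    by (auto simp: fword_def dest: in_set_takeD)
  have lz: "length z = n" using j xs by (simp add: z_def r_def)
  have "last z = c" using r1 by (simp add: z_def)
  moreover have "hd z = hd x" using tne ht by (simp add: z_def)
  ultimately have "z \<in> CRn k n" using frz setz lz c by (auto simp: CRn_def cyc_reduced_def fword_def)
  moreover have "take j z = take j x" using j xs by (simp add: z_def)
  moreover have "z ! j = b" using j xs by (simp add: z_def nth_append)
  ultimately show "b \<in> ext (CRn k n) j x" by (auto simp: ext_def)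
qed

lemma CR_lower: assumes k: "k \<ge> 2" shows "Qr k ^ n / Qr k ^ 2 \<le> real (card (CRn k n))"
proof -
  define q where "q = 2 * k - 1"
  define c where "c j = (if 0 < j \<and> Suc j < n then q else 1)" for j
  have a0: "(0, True) \<in> letters k" using k by (simp add: letters_def)
  have ne: "CRn k n \<noteq> {}"
  proof -
    have "replicate n (0, True) \<in> CRn k n" using a0 fr_replicate
      by (auto simp: CRn_def cyc_reduced_def fword_def)
    then show ?thesis by blast
  qed
  have "(\<Prod>j<n. c j) \<le> card (CRn k n)"
  proof (rule count_lower[OF finite_subset[OF CRn_W finite_W] _ ne])
    show "\<forall>x\<in>CRn k n. length x = n" by (simp add: CRn_def)
    show "\<forall>j<n. \<forall>x\<in>CRn k n. c j \<le> card (ext (CRn k n) j x)"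
    proof (intro allI impI ballI)
      fix j x assume jx: "j < n" "x \<in> CRn k n"
      show "c j \<le> card (ext (CRn k n) j x)"
      proof (cases "0 < j \<and> Suc j < n")
        case True
        have xl: "x ! (j - 1) \<in> letters k" using jx fword_nth by (auto simp: CRn_def cyc_reduced_def)
        have "card (letters k - {inv_letter (x ! (j - 1))}) = q"
          using inv_letters[OF xl] by (simp add: card_letters finite_letters q_def)
        moreover have "finite (ext (CRn k n) j x)"
          using ext_sub_letters[OF CRn_W jx(1)] finite_letters finite_subset by blast
        ultimately have "q \<le> card (ext (CRn k n) j x)"
          using card_mono[OF _ CR_ext[OF k _ _ jx(2)]] True by metis
        then show ?thesis using True by (simp add: c_def)
      next
        case False
        then have "c j = 1" unfolding c_def by auto
        then show ?thesis using card_ext_ge1[OF CRn_W jx(1,2)] by simp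
      qed
    qed
  qed
  moreover have "Qr k ^ n / Qr k ^ 2 \<le> real (\<Prod>j<n. c j)"
  proof (cases "n \<ge> 2")
    case True
    have "{..<n} \<inter> {j. 0 < j \<and> Suc j < n} = {1..<n-1}" by auto
    moreover have "{..<n} \<inter> - {j. 0 < j \<and> Suc j < n} = {0, n - 1}" using True by auto
    ultimately have "(\<Prod>j<n. c j) = q ^ (n - 2)" unfolding c_def
      by (simp add: prod.If_cases numeral_2_eq_2)
    moreover have "Qr k ^ n / Qr k ^ 2 = Qr k ^ (n - 2)"
      using True Qr_ge[OF k] by (simp add: power_diff)
    ultimately show ?thesis by (simp add: Qr_def q_def)
  next
    case False
    have "(\<Prod>j<n. c j) = 1" unfolding c_def using False by (intro prod.neutral) auto
    moreover have "Qr k ^ n \<le> Qr k ^ 2" using False Qr_ge[OF k] by (intro power_increasing) auto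
    ultimately show ?thesis using Qr_ge[OF k] by simp
  qed
  ultimately show ?thesis by linarith
qed



lemma poly_exp:
  fixes s :: real assumes s: "0 < s" "s < 1"
  shows "\<exists>Kb>0. \<forall>n. (real n + 1) ^ 2 * (s ^ 2) ^ n \<le> Kb * s ^ n"
proof -
  define b where "b = 1 / sqrt s"
  define h where "h = b - 1"
  have ss: "0 < sqrt s" "sqrt s < 1" using s by auto
  have b1: "b > 1" using ss by (simp add: b_def)
  then have h0: "h > 0" by (simp add: h_def)
  have b2: "b ^ 2 = 1 / s" using s by (simp add: b_def power_divide)
  define Kb where "Kb = (1 + 1 / h) ^ 2"
  have "(real n + 1) ^ 2 * (s ^ 2) ^ n \<le> Kb * s ^ n" for n
  proof -
    have bern: "1 + real n * h \<le> b ^ n" using Bernoulli_inequality[of h n] h0 by (simp add: h_def)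
    have bn1: "1 \<le> b ^ n" using b1 by simp
    have "real n * h \<le> b ^ n" using bern by linarith
    then have "real n \<le> b ^ n / h" using h0 by (simp add: pos_le_divide_eq)
    moreover have "(1 + 1 / h) * b ^ n = b ^ n + b ^ n / h" by (simp add: distrib_right)
    ultimately have "real n + 1 \<le> (1 + 1 / h) * b ^ n" using bn1 by linarith
    then have "(real n + 1) ^ 2 \<le> ((1 + 1 / h) * b ^ n) ^ 2" by (intro power_mono) auto
    also have "\<dots> = Kb * (b ^ 2) ^ n" by (simp add: Kb_def power_mult_distrib power_mult[symmetric] mult.commute)
    finally have "(real n + 1) ^ 2 * (s ^ 2) ^ n \<le> Kb * (b ^ 2) ^ n * (s ^ 2) ^ n"
      using s by (intro mult_right_mono) auto
    also have "\<dots> = Kb * (b ^ 2 * s ^ 2) ^ n" by (simp add: power_mult_distrib)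
    also have "b ^ 2 * s ^ 2 = s" using b2 s by (simp add: power2_eq_square)
    finally show ?thesis .
  qed
  moreover have "1 + 1 / h > 0" using h0 by (simp add: add_pos_pos)
  then have "Kb > 0" by (simp add: Kb_def)
  ultimately show ?thesis by blast
qed

lemma PE_pos: "card (PE k) \<ge> 1"
proof -
  have "restrict id (letters k) \<in> PE k" using id_R1 by (simp add: R1_def)
  then have "PE k \<noteq> {}" by blast
  then show ?thesis using finite_PE by (simp add: Suc_le_eq card_gt_0_iff)
qed

lemma bad_count2:
  assumes k: "k \<ge> 2" and lam: "0 < lam" "lam < 1"
  shows "real (card (Bad k lam m)) \<le> (4 * real (card (PE k)) / th k) * (real m + 1) * (Qr k * th k powr (lam / 2)) ^ m"
proof (cases "m \<ge> 1")
  case True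
  define N where "N = real (card (PE k))"
  define r where "r = th k powr (lam / 2)"
  have N1: "N \<ge> 1" using PE_pos by (simp add: N_def)
  have t0: "th k > 0" using th_pos[OF k] .
  have "(lam * real m - 2) / 2 = real m * (lam / 2) - 1" by (simp add: field_simps)
  then have "th k powr ((lam * real m - 2) / 2) = th k powr (real m * (lam / 2)) / th k powr 1"
    by (simp only: powr_diff)
  also have "\<dots> = r ^ m / th k" using t0 by (simp add: r_def powr_power)
  finally have e: "th k powr ((lam * real m - 2) / 2) = r ^ m / th k" .
  have "real (card (Bad k lam m)) \<le> (2 * N * real m + N) * (2 * Qr k ^ m * (r ^ m / th k))"
    using bad_count[OF k lam True] e by (simp add: N_def)
  also have "\<dots> \<le> (2 * N * (real m + 1)) * (2 * Qr k ^ m * (r ^ m / th k))"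
  proof (rule mult_right_mono)
    show "2 * N * real m + N \<le> 2 * N * (real m + 1)" using N1 by (simp add: distrib_left)
    have "0 \<le> r" by (simp add: r_def)
    moreover have "0 \<le> Qr k" using Qr_ge[OF k] by simp
    ultimately show "0 \<le> 2 * Qr k ^ m * (r ^ m / th k)" using t0 by (intro mult_nonneg_nonneg divide_nonneg_pos zero_le_power) auto
  qed
  also have "\<dots> = (4 * N / th k) * (real m + 1) * (Qr k * r) ^ m"
  proof -
    have "(Qr k * r) ^ m = Qr k ^ m * r ^ m" by (rule power_mult_distrib)
    then show ?thesis by simp
  qed
  finally show ?thesis unfolding N_def r_def .
next
  case False
  then have m0: "m = 0" by simp
  have sub0: "Bad k lam m \<subseteq> {[]}" using m0 by (auto simp: Bad_def)
  have "card (Bad k lam m) \<le> card {[] :: letter list}" by (rule card_mono[OF _ sub0]) simp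
  then have "card (Bad k lam m) \<le> 1" by simp
  moreover have "4 * real (card (PE k)) / th k \<ge> 1"
  proof -
    have "1 \<le> 4 * real (card (PE k))" using PE_pos[of k] by simp
    also have "\<dots> \<le> 4 * real (card (PE k)) / th k"
    proof -
      have "4 * real (card (PE k)) * th k \<le> 4 * real (card (PE k)) * 1"
        using th_le1[OF k] by (intro mult_left_mono) auto
      then show ?thesis using th_pos[OF k] by (simp only: pos_le_divide_eq)
    qed
    finally show ?thesis .
  qed
  ultimately show ?thesis using m0 by simp
qed



lemma main_bound:
  assumes k: "k \<ge> 2" and lam: "0 < lam" "lam < 1"
  shows "\<exists>C s. C > 0 \<and> 0 < s \<and> s < 1 \<and>
        (\<forall>n. \<bar>real (rho n (Eset k lam)) / real (rho n (CR k)) - 1\<bar> \<le> C * s ^ n)"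
proof -
  define \<theta> where "\<theta> = th k"
  define Q where "Q = Qr k"
  define N where "N = real (card (PE k))"
  define K where "K = 4 * N / \<theta>"
  define r where "r = \<theta> powr (lam / 2)"
  define s where "s = sqrt r"
  have t0: "0 < \<theta>" "\<theta> < 1" using th_pos[OF k] th_lt1[OF k] by (auto simp: \<theta>_def)
  have Q3: "Q \<ge> 3" using Qr_ge[OF k] by (simp add: Q_def)
  have r0: "0 < r" using t0 by (simp add: r_def)
  have r1: "r < 1" using t0 lam by (simp add: r_def powr01_less_one)
  have rt: "\<theta> \<le> r"
  proof -
    have "\<theta> powr 1 \<le> \<theta> powr (lam / 2)" by (rule powr_mono') (use t0 lam in auto)
    then show ?thesis using t0 by (simp add: r_def)
  qed
  have Qt: "Q * \<theta> \<ge> 1"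
  proof -
    have "Q * \<theta> = real (2 * k - 2)" using Q3 by (simp add: Q_def \<theta>_def Qr_def th_def)
    then show ?thesis using k by simp
  qed
  have Qr1: "Q * r \<ge> 1"
  proof -
    have "Q * \<theta> \<le> Q * r" using rt Q3 by (intro mult_left_mono) auto
    then show ?thesis using Qt by linarith
  qed
  have N1: "N \<ge> 1" using PE_pos by (simp add: N_def)
  have K0: "K > 0" using N1 t0 by (simp add: K_def)
  have s0: "0 < s" "s < 1" using r0 r1 by (auto simp: s_def)
  have s2: "s ^ 2 = r" using r0 by (simp add: s_def)
  obtain Kb where Kb: "Kb > 0" "\<And>n. (real n + 1) ^ 2 * (s ^ 2) ^ n \<le> Kb * s ^ n"
    using poly_exp[OF s0] by blast
  define C where "C = K * Q ^ 2 * Kb"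
  have C0: "C > 0" using K0 Q3 Kb(1) by (simp add: C_def)
  have bad: "real (card (Bad k lam m)) \<le> K * (real m + 1) * (Q * r) ^ m" for m
    using bad_count2[OF k lam, of m] by (simp add: K_def N_def \<theta>_def Q_def r_def)
  have "\<bar>real (rho n (Eset k lam)) / real (rho n (CR k)) - 1\<bar> \<le> C * s ^ n" for n
  proof -
    define A where "A = {x \<in> CR k. length x \<le> n}"
    define E where "E = {x \<in> Eset k lam. length x \<le> n}"
    have finA: "finite A"
    proof (rule finite_subset[OF _ finite_lists_length_le[OF finite_letters, of k n]])
      show "A \<subseteq> {xs. set xs \<subseteq> letters k \<and> length xs \<le> n}"
        by (auto simp: A_def CR_def cyc_reduced_def fword_def)
    qed
    have EA: "E \<subseteq> A" by (auto simp: E_def A_def Eset_def CR_def)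
    have finE: "finite E" using finite_subset[OF EA finA] .
    have CRA: "CRn k n \<subseteq> A" by (auto simp: CRn_def A_def CR_def)
    have low: "Q ^ n / Q ^ 2 \<le> real (card A)"
      using CR_lower[OF k, of n] card_mono[OF finA CRA] unfolding Q_def by linarith
    have lowpos: "0 < Q ^ n / Q ^ 2" using Q3 by simp
    have diffsub: "A - E \<subseteq> (\<Union>m\<in>{..n}. Bad k lam m)"
      by (auto simp: A_def E_def Bad_def CR_def)
    have "card A - card E = card (A - E)" using card_Diff_subset[OF finE EA] by simp
    also have "\<dots> \<le> card (\<Union>m\<in>{..n}. Bad k lam m)"
    proof (rule card_mono[OF _ diffsub])
      have "(\<Union>m\<in>{..n}. Bad k lam m) \<subseteq> {xs. set xs \<subseteq> letters k \<and> length xs \<le> n}"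
        by (auto simp: Bad_def cyc_reduced_def fword_def)
      then show "finite (\<Union>m\<in>{..n}. Bad k lam m)"
        using finite_subset[OF _ finite_lists_length_le[OF finite_letters]] by blast
    qed
    also have "\<dots> \<le> (\<Sum>m\<in>{..n}. card (Bad k lam m))" by (rule card_UN_le) simp
    finally have dnat: "card A - card E \<le> (\<Sum>m\<in>{..n}. card (Bad k lam m))" .
    have cEA: "card E \<le> card A" by (rule card_mono[OF finA EA])
    have "real (card A) - real (card E) = real (card A - card E)" using cEA by (simp add: of_nat_diff)
    also have "\<dots> \<le> (\<Sum>m\<in>{..n}. real (card (Bad k lam m)))"
      using dnat by (metis of_nat_le_iff of_nat_sum)
    also have "\<dots> \<le> (\<Sum>m\<in>{..n}. K * (real n + 1) * (Q * r) ^ n)"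
    proof (rule sum_mono)
      fix m assume "m \<in> {..n}"
      then have mn: "m \<le> n" by simp
      have "(Q * r) ^ m \<le> (Q * r) ^ n" by (rule power_increasing[OF mn Qr1])
      moreover have "real m + 1 \<le> real n + 1" using mn by simp
      ultimately have "K * (real m + 1) * (Q * r) ^ m \<le> K * (real n + 1) * (Q * r) ^ n"
        using K0 Qr1 by (intro mult_mono) auto
      then show "real (card (Bad k lam m)) \<le> K * (real n + 1) * (Q * r) ^ n"
        using bad[of m] by linarith
    qed
    also have "\<dots> = K * (real n + 1) ^ 2 * (Q * r) ^ n"
      by (simp add: power2_eq_square)
    finally have D: "real (card A) - real (card E) \<le> K * (real n + 1) ^ 2 * (Q * r) ^ n" .
    have apos: "0 < real (card A)" using low lowpos by linarith
    have "\<bar>real (card E) / real (card A) - 1\<bar> = (real (card A) - real (card E)) / real (card A)"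
      using apos cEA by (simp add: abs_if field_simps)
    also have "\<dots> \<le> (K * (real n + 1) ^ 2 * (Q * r) ^ n) / real (card A)"
      using D apos by (intro divide_right_mono) auto
    also have "\<dots> \<le> (K * (real n + 1) ^ 2 * (Q * r) ^ n) / (Q ^ n / Q ^ 2)"
    proof (rule divide_left_mono[OF low])
      show "0 < real (card A) * (Q ^ n / Q ^ 2)" by (rule mult_pos_pos[OF apos lowpos])
      show "0 \<le> K * (real n + 1) ^ 2 * (Q * r) ^ n" using K0 Qr1 by simp
    qed
    also have "\<dots> = K * Q ^ 2 * ((real n + 1) ^ 2 * r ^ n)"
      using Q3 by (simp add: power_mult_distrib)
    also have "\<dots> \<le> K * Q ^ 2 * (Kb * s ^ n)"
      using Kb(2)[of n] s2 K0 by (intro mult_left_mono) auto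
    also have "\<dots> = C * s ^ n" by (simp add: C_def)
    finally show ?thesis by (simp add: rho_def A_def E_def)
  qed
  then show ?thesis using C0 s0 by blast
qed


theorem lemma4p8:
  fixes k :: nat and lam :: real
  assumes "k > 1" and "0 < lam" and "lam < 1/3"
  shows "exp_CR_generic k (Eset k lam)"
proof -
  have k: "k \<ge> 2" using assms(1) by simp
  have lam: "0 < lam" "lam < 1" using assms(2,3) by auto
  have "Eset k lam \<subseteq> CR k" by (auto simp: Eset_def CR_def)
  then show ?thesis using main_bound[OF k lam] by (simp add: exp_CR_generic_def)
qed

end
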